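(* Let $\delta\le0.011$ and let $\mathcal{I}$ be a $\delta$-ONI instance with $n$ agents and $|N^1_1|\le n\left(\frac14-\delta\right)/\left(\frac14+\frac\delta3\right)$. Then every agent $i\in N^2$ receives a bag of value at least $\frac34+\delta$ at the end of Algorithm $\mathtt{approxMMS1}(\mathcal{I},\delta)$.
   Context: Instance: agents $[n]$, goods $[m]$, additive valuations; goods with index larger than $m$ are dummy goods of value 0. Ordered: $v_i(1)\ge\dots\ge v_i(m)$ for all $i$. Normalized: every agent $i$ has a partition of the goods into $n$ bundles each of value exactly 1 to $i$. $\alpha$-irreducible: for every $i$, $v_i(1)<\alpha$, $v_i(\{2n-1,2n,2n+1\})<\alpha$, $v_i(\{3n-2,\dots,3n+1\})<\alpha$, $v_i(\{1,2n+1\})<\alpha$. $\delta$-ONI: ordered, normalized, $(3/4+\delta)$-irreducible. $B_k=\{k,2n-k+1\}$ ($k\in[n]$); $N^1=\{i:v_i(B_k)\le1\ \forall k\}$; $N^2=[n]\setminus N^1$; $N^1_1=\{i\in N^1:v_i(2n+1)\ge\frac14-5\delta\}$. Algorithm $\mathtt{approxMMS1}(\mathcal{I},\delta)$: $\alpha=3/4+\delta$, bags $B_1,\dots,B_n$. Phase 1: while some unassigned agent $i$ and unassigned bag $B$ have $v_i(B)\ge\alpha$, assign such $B$ to an agent valuing it at least $\alpha$, choosing an agent of $N^1_1$ whenever one qualifies. Phase 2: process remaining bags one by one; for the current bag $B$, while no unassigned agent values it at least $\alpha$, add an arbitrary unused good with index $>2n$; then assign $B$ to an unassigned agent valuing it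 at least $\alpha$, preferring $N^1_1$. (If a good must be added but none is left, the algorithm stops.) *)

theory Defs
  imports Main "HOL.Real"
begin

(* Agents are 1..n, goods are 1..m; v i j is the value of good j to agent i.
   Goods with index > m are dummy goods of value 0. *)

definition val :: "(nat \<Rightarrow> nat \<Rightarrow> real) \<Rightarrow> nat \<Rightarrow> nat set \<Rightarrow> real" where
  "val v i S = (\<Sum>j\<in>S. v i j)"

definition valid_instance :: "nat \<Rightarrow> nat \<Rightarrow> (nat \<Rightarrow> nat \<Rightarrow> real) \<Rightarrow> bool" where
  "valid_instance n m v \<longleftrightarrow>
     (\<forall>i\<in>{1..n}. (\<forall>j\<in>{1..m}. 0 \<le> v i j) \<and> (\<forall>j. m < j \<longrightarrow> v i j = 0))"

definition ordered :: "nat \<Rightarrow> nat \<Rightarrow> (nat \<Rightarrow> nat \<Rightarrow> real) \<Rightarrow> bool" where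
  "ordered n m v \<longleftrightarrow>
     (\<forall>i\<in>{1..n}. \<forall>j k. 1 \<le> j \<longrightarrow> j \<le> k \<longrightarrow> k \<le> m \<longrightarrow> v i k \<le> v i j)"

definition normalized :: "nat \<Rightarrow> nat \<Rightarrow> (nat \<Rightarrow> nat \<Rightarrow> real) \<Rightarrow> bool" where
  "normalized n m v \<longleftrightarrow>
     (\<forall>i\<in>{1..n}. \<exists>P :: nat \<Rightarrow> nat set.
        (\<Union>j\<in>{1..n}. P j) = {1..m} \<and>
        (\<forall>j\<in>{1..n}. \<forall>j'\<in>{1..n}. j \<noteq> j' \<longrightarrow> P j \<inter> P j' = {}) \<and>
        (\<forall>j\<in>{1..n}. val v i (P j) = 1))"

definition irreducible :: "nat \<Rightarrow> (nat \<Rightarrow> nat \<Rightarrow> real) \<Rightarrow> real \<Rightarrow> bool" where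
  "irreducible n v \<alpha> \<longleftrightarrow>
     (\<forall>i\<in>{1..n}. v i 1 < \<alpha> \<and>
        val v i {2*n-1, 2*n, 2*n+1} < \<alpha> \<and>
        val v i {3*n-2..3*n+1} < \<alpha> \<and>
        val v i {1, 2*n+1} < \<alpha>)"

definition ONI :: "nat \<Rightarrow> nat \<Rightarrow> (nat \<Rightarrow> nat \<Rightarrow> real) \<Rightarrow> real \<Rightarrow> bool" where
  "ONI n m v \<delta> \<longleftrightarrow> valid_instance n m v \<and> ordered n m v \<and> normalized n m v \<and>
     irreducible n v (3/4 + \<delta>)"

definition Bk :: "nat \<Rightarrow> nat \<Rightarrow> nat set" where
  "Bk n k = {k, 2*n - k + 1}"

definition N1 :: "nat \<Rightarrow> (nat \<Rightarrow> nat \<Rightarrow> real) \<Rightarrow> nat set" where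
  "N1 n v = {i\<in>{1..n}. \<forall>k\<in>{1..n}. val v i (Bk n k) \<le> 1}"

definition N2 :: "nat \<Rightarrow> (nat \<Rightarrow> nat \<Rightarrow> real) \<Rightarrow> nat set" where
  "N2 n v = {1..n} - N1 n v"

definition N11 :: "nat \<Rightarrow> (nat \<Rightarrow> nat \<Rightarrow> real) \<Rightarrow> real \<Rightarrow> nat set" where
  "N11 n v \<delta> = {i\<in>N1 n v. 1/4 - 5*\<delta> \<le> v i (2*n+1)}"

(* State of approxMMS1: contents of bag k (k in 1..n), owner of bag k,
   phase flag (False = Phase 1, True = Phase 2), current bag in Phase 2. *)
record st =
  bag :: "nat \<Rightarrow> nat set"
  own :: "nat \<Rightarrow> nat option"
  ph2 :: bool
  cur :: "nat option"

definition init :: "nat \<Rightarrow> st" where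
  "init n = \<lparr>bag = Bk n, own = (\<lambda>_. None), ph2 = False, cur = None\<rparr>"

definition assigned :: "nat \<Rightarrow> st \<Rightarrow> nat \<Rightarrow> bool" where
  "assigned n s a \<longleftrightarrow> (\<exists>k\<in>{1..n}. own s k = Some a)"

definition eligible :: "nat \<Rightarrow> (nat \<Rightarrow> nat \<Rightarrow> real) \<Rightarrow> real \<Rightarrow> st \<Rightarrow> nat \<Rightarrow> nat \<Rightarrow> bool" where
  "eligible n v \<delta> s k a \<longleftrightarrow>
     a \<in> {1..n} \<and> \<not> assigned n s a \<and> 3/4 + \<delta> \<le> val v a (bag s k) \<and>
     (a \<in> N11 n v \<delta> \<or>
      \<not> (\<exists>b\<in>N11 n v \<delta>. \<not> assigned n s b \<and> 3/4 + \<delta> \<le> val v b (bag s k)))"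

(* one (nondeterministic) step of approxMMS1(I, delta) *)
inductive step :: "nat \<Rightarrow> nat \<Rightarrow> (nat \<Rightarrow> nat \<Rightarrow> real) \<Rightarrow> real \<Rightarrow> st \<Rightarrow> st \<Rightarrow> bool"
  for n m v \<delta> where
  phase1_assign:
    "\<lbrakk>\<not> ph2 s; k \<in> {1..n}; own s k = None; eligible n v \<delta> s k a\<rbrakk>
     \<Longrightarrow> step n m v \<delta> s (s\<lparr>own := (own s)(k := Some a)\<rparr>)"
| to_phase2:
    "\<lbrakk>\<not> ph2 s;
      \<not> (\<exists>k\<in>{1..n}. \<exists>a\<in>{1..n}. own s k = None \<and> \<not> assigned n s a \<and>
            3/4 + \<delta> \<le> val v a (bag s k))\<rbrakk>
     \<Longrightarrow> step n m v \<delta> s (s\<lparr>ph2 := True\<rparr>)"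
| phase2_pick:
    "\<lbrakk>ph2 s; cur s = None; k \<in> {1..n}; own s k = None\<rbrakk>
     \<Longrightarrow> step n m v \<delta> s (s\<lparr>cur := Some k\<rparr>)"
| phase2_add:
    "\<lbrakk>ph2 s; cur s = Some k;
      \<not> (\<exists>a\<in>{1..n}. \<not> assigned n s a \<and> 3/4 + \<delta> \<le> val v a (bag s k));
      2*n < g; g \<le> m; g \<notin> (\<Union>j\<in>{1..n}. bag s j)\<rbrakk>
     \<Longrightarrow> step n m v \<delta> s (s\<lparr>bag := (bag s)(k := insert g (bag s k))\<rparr>)"
| phase2_assign:
    "\<lbrakk>ph2 s; cur s = Some k; eligible n v \<delta> s k a\<rbrakk>
     \<Longrightarrow> step n m v \<delta> s (s\<lparr>own := (own s)(k := Some a), cur := None\<rparr>)"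

end

theory Submission
  imports Defs
begin

lemma sum_refl:
  fixes w :: "nat \<Rightarrow> real"
  assumes "a \<le> b" "b \<le> N"
  shows "(\<Sum>k=a..b. w (N - k + 1)) = sum w {N-b+1..N-a+1}"
  by (rule sum.reindex_bij_witness[of _ "\<lambda>j. N + 1 - j" "\<lambda>k. N - k + 1"]) (use assms in auto)

lemma arith1:
  fixes \<delta> x y B :: real
  shows "\<delta> \<le> 11 / 1000 \<Longrightarrow> 2 * y \<le> B \<Longrightarrow> 1 - (3 / 4 + \<delta>) + x < y \<Longrightarrow> x < 1 / 12 + \<delta> \<Longrightarrow> 0 < \<delta> \<Longrightarrow> 3 / 4 + \<delta> + x \<le> 2 / 3 + B / 3"
  by linarith

lemma arith2: fixes B :: real shows "B \<le> 1 \<Longrightarrow> B \<le> 2 / 3 + B / 3" by linarith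

lemma arith3:
  fixes S1 S2 S3 l K n c T sM y :: real
  shows "S1 \<le> l - 1 \<Longrightarrow> S2 \<le> 1 + (K - l) + c - T \<Longrightarrow> S3 \<le> (2*n - 2*K)/3 + (sM - y)/3
    \<Longrightarrow> sM + c - y \<le> n - K \<Longrightarrow> 2 * c \<le> T * 3 \<Longrightarrow> S1 + S2 + S3 \<le> n"
  by (simp add: field_simps)

lemma key:
  fixes w :: "nat \<Rightarrow> real" and P :: "nat \<Rightarrow> nat set" and n m :: nat and \<delta> :: real
  assumes d0: "0 < \<delta>" and d1: "\<delta> \<le> 0.011"
    and nonneg: "\<And>j. 1 \<le> j \<Longrightarrow> 0 \<le> w j"
    and anti: "\<And>j k. 1 \<le> j \<Longrightarrow> j \<le> k \<Longrightarrow> w k \<le> w j"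
    and zero: "\<And>j. m < j \<Longrightarrow> w j = 0"
    and Pcov: "(\<Union>p\<in>{1..n}. P p) = {1..m}"
    and Pdis: "\<And>p q. p\<in>{1..n} \<Longrightarrow> q\<in>{1..n} \<Longrightarrow> p \<noteq> q \<Longrightarrow> P p \<inter> P q = {}"
    and Pval: "\<And>p. p\<in>{1..n} \<Longrightarrow> sum w (P p) = 1"
    and irr: "w 1 + w (2*n+1) < 3/4 + \<delta>"
    and Ex: "\<exists>k\<in>{1..n}. 1 < w k + w (2*n-k+1)"
  shows "(\<Sum>k=1..n. max (w k + w (2*n-k+1)) (3/4 + \<delta> + w (2*n+1))) \<le> real n"
proof -
  define x where "x = w (2*n+1)"
  define \<alpha> where "\<alpha> = 3/4 + \<delta>"
  define \<theta> where "\<theta> = 1 - \<alpha> + x"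
  define g where "g k = 2*n - k + 1" for k
  define E where "E = {k\<in>{1..n}. 1 < w k + w (g k)}"
  have x0: "0 \<le> x" using nonneg x_def by simp
  have finE: "finite E" "E \<noteq> {}" using Ex by (auto simp: E_def g_def)
  define l where "l = Min E"
  define K where "K = Max E"
  have lE: "l \<in> E" and KE: "K \<in> E" using finE l_def K_def by auto
  have lK: "l \<le> K" using finE l_def K_def KE by simp
  have l1: "1 \<le> l" and Kn: "K \<le> n" using lE KE E_def by auto
  have notE_lt: "w k + w (g k) \<le> 1" if "k \<in> {1..n}" "k < l" for k
  proof (rule ccontr)
    assume "\<not> ?thesis" hence "k \<in> E" using that E_def by auto
    hence "l \<le> k" using finE l_def by simp
    thus False using that by simp
  qed
  have notE_gt: "w k + w (g k) \<le> 1" if "k \<in> {1..n}" "K < k" for k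
  proof (rule ccontr)
    assume "\<not> ?thesis" hence "k \<in> E" using that E_def by auto
    hence "k \<le> K" using finE K_def by simp
    thus False using that by simp
  qed
  have w1: "w 1 < \<alpha> - x" using irr by (simp add: \<alpha>_def x_def)
  have wk_lt: "w k < \<alpha> - x" if "1 \<le> k" for k using anti[OF order_refl that] w1 by simp
  define y where "y = w (g K)"
  have yK: "1 < w K + y" using KE by (simp add: E_def y_def)
  have y_gt: "\<theta> < y" using yK wk_lt[of K] l1 lK by (simp add: \<theta>_def)
  have gK_m: "g K \<le> m"
  proof (rule ccontr)
    assume "\<not> ?thesis" hence "y = 0" using zero y_def by simp
    thus False using yK wk_lt[of K] l1 lK x0 d1 by (simp add: \<alpha>_def)
  qed
  have gl_m: "g l \<le> m"
  proof (rule ccontr)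
    assume "\<not> ?thesis" hence "w (g l) = 0" using zero by simp
    thus False using lE wk_lt[of l] l1 x0 d1 by (simp add: \<alpha>_def E_def)
  qed
  have Pm: "P p \<subseteq> {1..m}" if "p \<in> {1..n}" for p using Pcov that by blast
  have Pfin: "finite (P p)" if "p \<in> {1..n}" for p using Pm[OF that] finite_subset by blast
  have sep: False if "k \<in> E" "p \<in> {1..n}" "j1 \<in> P p" "j2 \<in> P p" "j1 \<le> k" "j2 \<le> g k" "j1 \<noteq> j2"
    for k p j1 j2
  proof -
    have j1: "1 \<le> j1" and j2: "1 \<le> j2" using Pm[OF that(2)] that(3,4) by auto
    have "w j1 + w j2 = sum w {j1, j2}" using that(7) by simp
    also have "\<dots> \<le> sum w (P p)"
      by (rule sum_mono2[OF Pfin[OF that(2)]]) (use that Pm[OF that(2)] nonneg in auto)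
    also have "\<dots> = 1" using Pval that(2) by simp
    finally have "w j1 + w j2 \<le> 1" .
    moreover have "w k \<le> w j1" using anti[OF j1 that(5)] .
    moreover have "w (g k) \<le> w j2" using anti[OF j2 that(6)] .
    moreover have "1 < w k + w (g k)" using that(1) E_def by simp
    ultimately show False by simp
  qed
  define bi where "bi j = (SOME p. p \<in> {1..n} \<and> j \<in> P p)" for j
  have bi: "bi j \<in> {1..n} \<and> j \<in> P (bi j)" if "j \<in> {1..m}" for j
  proof -
    have "\<exists>p. p \<in> {1..n} \<and> j \<in> P p" using that Pcov by blast
    thus ?thesis unfolding bi_def by (rule someI_ex)
  qed
  have bi_uniq: "bi j = p" if "p \<in> {1..n}" "j \<in> P p" for j p
  proof -
    have "j \<in> {1..m}" using Pm that by blast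
    from bi[OF this] have "bi j \<in> {1..n}" "j \<in> P (bi j)" by auto
    thus ?thesis using Pdis[of "bi j" p] that by blast
  qed
  have sepb: "bi j1 \<noteq> bi j2" if "k \<in> E" "j1 \<in> {1..m}" "j2 \<in> {1..m}" "j1 \<le> k" "j2 \<le> g k" "j1 \<noteq> j2"
    for k j1 j2
  proof
    assume eq: "bi j1 = bi j2"
    show False using sep[of k "bi j1" j1 j2] bi[OF that(2)] bi[OF that(3)] eq that by auto
  qed
  have Kn2: "n < g K" using Kn by (simp add: g_def)
  have Km: "K \<le> m" using Kn Kn2 gK_m by simp
  have injbi: "inj_on bi {1..K}"
  proof (rule inj_onI)
    fix a b assume "a \<in> {1..K}" "b \<in> {1..K}" "bi a = bi b"
    moreover have "a \<in> {1..m}" "b \<in> {1..m}" "b \<le> g K" "a \<le> K" using calculation Km Kn2 Kn by auto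
    ultimately show "a = b" using sepb[OF KE, of a b] by blast
  qed
  define Cb where "Cb = {1..n} - bi ` {1..K}"
  have biK: "bi ` {1..K} \<subseteq> {1..n}" using bi Km by auto
  have cardCb: "card Cb = n - K"
    using card_Diff_subset[OF _ biK] card_image[OF injbi] by (simp add: Cb_def)
  define M where "M = {K+1..g K}"
  have M_Cb: "bi j \<in> Cb" if "j \<in> M" for j
  proof -
    have jm: "j \<in> {1..m}" using that gK_m by (auto simp: M_def)
    have nk: "bi j \<noteq> bi k" if "k \<in> {1..K}" for k
      using sepb[OF KE, of k j] that jm Km \<open>j \<in> M\<close> by (auto simp: M_def)
    have "bi j \<notin> bi ` {1..K}" using nk by fastforce
    thus ?thesis using bi[OF jm] by (simp add: Cb_def)
  qed
  have cardM: "card M = 2*(n-K) + 1" using Kn by (simp add: M_def g_def)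
  have finCb: "finite Cb" by (simp add: Cb_def)
  have Cbn: "Cb \<subseteq> {1..n}" by (auto simp: Cb_def)
  have pig: "\<exists>p\<in>Cb. 3 \<le> card (M \<inter> P p)"
  proof (rule ccontr)
    assume "\<not> ?thesis" hence le2: "\<And>p. p \<in> Cb \<Longrightarrow> card (M \<inter> P p) \<le> 2" by force
    have "M = (\<Union>p\<in>Cb. M \<inter> P p)"
    proof
      show "M \<subseteq> (\<Union>p\<in>Cb. M \<inter> P p)"
      proof
        fix j assume j: "j \<in> M"
        hence "j \<in> {1..m}" using gK_m by (auto simp: M_def)
        hence "j \<in> P (bi j)" using bi by blast
        with M_Cb[OF j] j show "j \<in> (\<Union>p\<in>Cb. M \<inter> P p)" by blast
      qed
    qed auto
    moreover have "\<forall>p\<in>Cb. \<forall>q\<in>Cb. p \<noteq> q \<longrightarrow> (M \<inter> P p) \<inter> (M \<inter> P q) = {}"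
      using Pdis Cbn by blast
    moreover have "\<forall>p\<in>Cb. finite (M \<inter> P p)" by (simp add: M_def)
    ultimately have "card M = (\<Sum>p\<in>Cb. card (M \<inter> P p))"
      using card_UN_disjoint[OF finCb, of "\<lambda>p. M \<inter> P p"] by simp
    also have "\<dots> \<le> (\<Sum>p\<in>Cb. 2)" by (rule sum_mono) (use le2 in auto)
    also have "\<dots> = 2 * (n - K)" using cardCb by simp
    finally show False using cardM by simp
  qed
  have y3: "y \<le> 1/3"
  proof -
    obtain p where p: "p \<in> Cb" "3 \<le> card (M \<inter> P p)" using pig by blast
    have pn: "p \<in> {1..n}" using p Cbn by auto
    have "real (card (M \<inter> P p)) * y \<le> sum w (M \<inter> P p)"
      by (rule sum_bounded_below) (auto simp: M_def y_def intro!: anti)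
    also have "\<dots> \<le> sum w (P p)"
      by (rule sum_mono2[OF Pfin[OF pn]]) (use Pm[OF pn] nonneg in auto)
    also have "\<dots> = 1" using Pval pn by simp
    finally have "real (card (M \<inter> P p)) * y \<le> 1" .
    moreover have "0 \<le> y" using nonneg[of "g K"] y_def by (simp add: g_def)
    moreover have "3 * y \<le> real (card (M \<inter> P p)) * y"
      using p(2) \<open>0 \<le> y\<close> by (intro mult_right_mono) auto
    ultimately show ?thesis by simp
  qed

  have x_lt: "x < 1/12 + \<delta>" using y_gt y3 by (simp add: \<theta>_def \<alpha>_def)
  have th_pos: "0 < \<theta>" using d1 x0 by (simp add: \<theta>_def \<alpha>_def)
  have gl_gt: "\<theta> < w (g l)" using lE wk_lt[of l] l1 by (simp add: E_def \<theta>_def)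
  have mid: "\<alpha> + x \<le> w k + w (g k)" if "k \<in> {l..K}" for k
  proof -
    have "w K \<le> w k" using anti[of k K] that l1 by simp
    moreover have "g k \<le> g l" "1 \<le> g k" using that Kn unfolding g_def by auto
    hence "w (g l) \<le> w (g k)" using anti[of "g k" "g l"] by simp
    ultimately show ?thesis using yK y3 gl_gt d1 by (simp add: \<theta>_def \<alpha>_def)
  qed
  define W where "W = {g K..g l}"
  have cardW: "card W = K - l + 1" using lK Kn by (simp add: W_def g_def)
  have Wm: "W \<subseteq> {1..m}" using gl_m by (auto simp: W_def g_def)
  have W_loc: "bi j \<in> Cb \<or> (\<exists>k\<in>{l<..K}. bi j = bi k)" if "j \<in> W" for j
  proof (cases "bi j \<in> Cb")
    case False
    have jm: "j \<in> {1..m}" using that Wm by auto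
    then obtain k where k: "k \<in> {1..K}" "bi j = bi k" using False bi[OF jm] by (auto simp: Cb_def)
    have "\<not> k \<le> l"
    proof
      assume kl: "k \<le> l"
      have "j \<le> g l" "K < j" using that Kn2 Kn by (auto simp: W_def g_def)
      thus False using sepb[OF lE, of k j] k kl jm Km by auto
    qed
    thus ?thesis using k by auto
  qed simp
  define Rk where "Rk k = P (bi k) - {k}" for k
  have wk_eq: "w k = 1 - sum w (Rk k)" if "k \<in> {1..K}" for k
  proof -
    have km: "k \<in> {1..m}" using that Km by auto
    have "sum w (P (bi k)) = w k + sum w (Rk k)"
      unfolding Rk_def using bi[OF km] Pfin by (simp add: sum.remove)
    thus ?thesis using Pval bi[OF km] by simp
  qed
  have Rk_gt: "\<theta> < sum w (Rk k)" if "k \<in> {1..K}" for k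
    using wk_eq[OF that] wk_lt[of k] that by (simp add: \<theta>_def)
  have Rk_fin: "finite (Rk k)" if "k \<in> {1..K}" for k
    using Pfin bi Km that by (auto simp: Rk_def)
  have Rk_m: "Rk k \<subseteq> {1..m}" if "k \<in> {1..K}" for k
    using Pm bi Km that unfolding Rk_def by fastforce
  have Rk_disj: "Rk k \<inter> Rk k' = {}" if "k \<in> {1..K}" "k' \<in> {1..K}" "k \<noteq> k'" for k k'
  proof -
    have "bi k \<noteq> bi k'" using injbi that by (auto dest: inj_onD)
    thus ?thesis using Pdis[of "bi k" "bi k'"] bi Km that by (auto simp: Rk_def)
  qed
  define Wc where "Wc = {j\<in>W. bi j \<in> Cb}"
  define Wr where "Wr = W - Wc"
  define J where "J = {k\<in>{l..K}. Rk k \<inter> W \<noteq> {}}"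
  have finJ: "finite J" by (simp add: J_def)
  have Jsub: "J \<subseteq> {1..K}" using l1 by (auto simp: J_def)
  have Wr_eq: "Wr = (\<Union>k\<in>J. Rk k \<inter> W)"
  proof
    show "Wr \<subseteq> (\<Union>k\<in>J. Rk k \<inter> W)"
    proof
      fix j assume j: "j \<in> Wr"
      hence jW: "j \<in> W" and nc: "bi j \<notin> Cb" by (auto simp: Wr_def Wc_def)
      then obtain k where k: "k \<in> {l<..K}" "bi j = bi k" using W_loc by blast
      have jm: "j \<in> {1..m}" using jW Wm by auto
      have "K < j" using jW Kn2 Kn by (auto simp: W_def g_def)
      hence "j \<in> Rk k" using bi[OF jm] k by (auto simp: Rk_def)
      moreover have "k \<in> J" using k jW calculation unfolding J_def by auto
      ultimately show "j \<in> (\<Union>k\<in>J. Rk k \<inter> W)" using jW by blast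
    qed
  next
    show "(\<Union>k\<in>J. Rk k \<inter> W) \<subseteq> Wr"
    proof
      fix j assume "j \<in> (\<Union>k\<in>J. Rk k \<inter> W)"
      then obtain k where k: "k \<in> J" "j \<in> Rk k" "j \<in> W" by blast
      have k1: "k \<in> {1..K}" using k Jsub by auto
      have "j \<in> P (bi k)" using k by (simp add: Rk_def)
      hence "bi j = bi k" using bi_uniq bi Km k1 by auto
      hence "bi j \<notin> Cb" using k1 by (auto simp: Cb_def)
      thus "j \<in> Wr" using k by (simp add: Wr_def Wc_def)
    qed
  qed
  have disjJ: "\<forall>k\<in>J. \<forall>k'\<in>J. k \<noteq> k' \<longrightarrow> (Rk k \<inter> W) \<inter> (Rk k' \<inter> W) = {}"
    using Rk_disj Jsub by blast
  have finRW: "\<forall>k\<in>J. finite (Rk k \<inter> W)" using Rk_fin Jsub by auto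
  have sumWr: "sum w Wr \<le> (\<Sum>k\<in>J. sum w (Rk k))"
  proof -
    have "sum w Wr = (\<Sum>k\<in>J. sum w (Rk k \<inter> W))"
      unfolding Wr_eq by (rule sum.UNION_disjoint[OF finJ finRW disjJ])
    also have "\<dots> \<le> (\<Sum>k\<in>J. sum w (Rk k))"
    proof (rule sum_mono)
      fix k assume k: "k \<in> J"
      show "sum w (Rk k \<inter> W) \<le> sum w (Rk k)"
      proof (rule sum_mono2)
        have k1: "k \<in> {1..K}" using k Jsub by auto
        show "finite (Rk k)" using Rk_fin[OF k1] .
        show "\<And>b. b \<in> Rk k - Rk k \<inter> W \<Longrightarrow> 0 \<le> w b" using Rk_m[OF k1] nonneg by auto
      qed auto
    qed
    finally show ?thesis .
  qed
  have cardWr: "card J \<le> card Wr"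
  proof -
    have "card Wr = (\<Sum>k\<in>J. card (Rk k \<inter> W))"
      unfolding Wr_eq by (rule card_UN_disjoint[OF finJ finRW disjJ])
    also have "\<dots> \<ge> (\<Sum>k\<in>J. 1)"
    proof (rule sum_mono)
      fix k assume k: "k \<in> J"
      have "finite (Rk k \<inter> W)" using Rk_fin Jsub k by auto
      moreover have "Rk k \<inter> W \<noteq> {}" using k by (simp add: J_def)
      ultimately show "1 \<le> card (Rk k \<inter> W)" by (simp add: Suc_le_eq card_gt_0_iff)
    qed
    finally show ?thesis by simp
  qed
  have finW: "finite W" by (simp add: W_def)
  have cardWcr: "card W = card Wc + card Wr"
    using card_Diff_subset[of Wc W] finW by (simp add: Wr_def Wc_def card_mono)
  have sumWcr: "sum w W = sum w Wc + sum w Wr"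
    using sum.subset_diff[of Wc W w] finW by (simp add: Wr_def Wc_def)
  have sumRk: "sum w Wr + \<theta> * card Wc \<le> (\<Sum>k\<in>{l..K}. sum w (Rk k))"
  proof -
    have JlK: "J \<subseteq> {l..K}" by (auto simp: J_def)
    have "(\<Sum>k\<in>{l..K}. sum w (Rk k)) = (\<Sum>k\<in>J. sum w (Rk k)) + (\<Sum>k\<in>{l..K} - J. sum w (Rk k))"
      using sum.subset_diff[OF JlK, of "\<lambda>k. sum w (Rk k)"] by simp
    moreover have "real (card ({l..K} - J)) * \<theta> \<le> (\<Sum>k\<in>{l..K} - J. sum w (Rk k))"
      by (rule sum_bounded_below) (use Rk_gt l1 in \<open>auto intro: less_imp_le\<close>)
    moreover have "card ({l..K} - J) = (K - l + 1) - card J"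
      using card_Diff_subset[OF finJ JlK] lK by simp
    moreover have "card Wc \<le> (K - l + 1) - card J" using cardWr cardWcr cardW by simp
    ultimately show ?thesis using sumWr th_pos
      by (smt (verit, ccfv_SIG) mult.commute mult_right_mono of_nat_mono)
  qed

  have S2: "(\<Sum>k=l..K. w k + w (g k)) \<le> real (K - l + 1) + sum w Wc - \<theta> * card Wc"
  proof -
    have "(\<Sum>k=l..K. w k) = (\<Sum>k=l..K. 1 - sum w (Rk k))"
      by (rule sum.cong) (use wk_eq l1 in auto)
    also have "\<dots> = real (K - l + 1) - (\<Sum>k=l..K. sum w (Rk k))"
      using lK by (simp add: sum_subtractf Suc_diff_le)
    finally have a: "(\<Sum>k=l..K. w k) = real (K - l + 1) - (\<Sum>k=l..K. sum w (Rk k))" .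
    have b: "(\<Sum>k=l..K. w (g k)) = sum w W"
      unfolding g_def W_def using sum_refl[of l K "2*n" w] lK Kn by simp
    show ?thesis using a b sumRk sumWcr by (simp add: sum.distrib)
  qed
  have sumM: "(\<Sum>k=K+1..n. w k + w (g k)) = sum w M - y"
  proof -
    have b: "(\<Sum>k=K+1..n. w (g k)) = sum w {n+1..2*n-K}"
    proof (cases "K < n")
      case True
      have e1: "2*n - n + 1 = n + 1" by simp
      have e2: "2*n - (K+1) + 1 = 2*n - K" using True by simp
      show ?thesis unfolding g_def using sum_refl[of "K+1" n "2*n" w, unfolded e1 e2] True by simp
    next
      case False thus ?thesis using Kn by simp
    qed
    have c: "sum w {K+1..n} + sum w {n+1..2*n-K} = sum w {K+1..2*n-K}"
    proof -
      have "{K+1..2*n-K} = {K+1..n} \<union> {n+1..2*n-K}" using Kn by auto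
      thus ?thesis by (simp add: sum.union_disjoint[symmetric] ivl_disj_int)
    qed
    have d: "sum w M = sum w {K+1..2*n-K} + y"
    proof -
      have "g K = Suc (2*n-K)" using Kn by (simp add: g_def)
      moreover have "\<not> 2*n - K < K" using Kn by simp
      ultimately show ?thesis unfolding M_def y_def by (simp add: sum.cl_ivl_Suc)
    qed
    show ?thesis using b c d by (simp add: sum.distrib)
  qed
  define UC where "UC = (\<Union>p\<in>Cb. P p)"
  have finUC: "finite UC" using Pfin Cbn finCb by (auto simp: UC_def)
  have sumUC: "sum w UC = real (n - K)"
  proof -
    have "sum w UC = (\<Sum>p\<in>Cb. sum w (P p))"
    proof -
      have "\<forall>p\<in>Cb. \<forall>q\<in>Cb. p \<noteq> q \<longrightarrow> P p \<inter> P q = {}" using Pdis Cbn by blast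
      moreover have "\<forall>p\<in>Cb. finite (P p)" using Pfin Cbn by blast
      ultimately show ?thesis unfolding UC_def by (rule sum.UNION_disjoint[OF finCb, rotated])
    qed
    also have "\<dots> = (\<Sum>p\<in>Cb. 1)" by (rule sum.cong) (use Pval Cbn in auto)
    finally show ?thesis using cardCb by simp
  qed
  have MW_UC: "M \<union> Wc \<subseteq> UC"
  proof
    fix j assume j: "j \<in> M \<union> Wc"
    show "j \<in> UC"
    proof (cases "j \<in> M")
      case True
      hence "j \<in> {1..m}" using gK_m by (auto simp: M_def)
      thus ?thesis using bi M_Cb[OF True] by (auto simp: UC_def)
    next
      case False
      hence "j \<in> Wc" using j by simp
      hence jW: "j \<in> W" and jC: "bi j \<in> Cb" by (auto simp: Wc_def)
      hence "j \<in> {1..m}" using Wm by auto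
      hence "j \<in> P (bi j)" using bi by blast
      thus ?thesis using jC by (auto simp: UC_def)
    qed
  qed
  have UCm: "UC \<subseteq> {1..m}" unfolding UC_def using Pm Cbn by blast
  have finM: "finite M" by (simp add: M_def)
  have finWc: "finite Wc" using finW by (simp add: Wc_def)
  have C1: "sum w M + sum w Wc - y \<le> real (n - K)"
  proof -
    have "sum w (M \<union> Wc) \<le> sum w UC"
      by (rule sum_mono2[OF finUC MW_UC]) (use UCm nonneg in auto)
    moreover have "sum w (M \<union> Wc) = sum w M + sum w Wc - sum w (M \<inter> Wc)"
      using sum_Un[OF finM finWc] by simp
    moreover have "sum w (M \<inter> Wc) \<le> sum w {g K}"
      using nonneg[of "g K"] by (intro sum_mono2) (auto simp: M_def Wc_def W_def g_def)
    ultimately show ?thesis using sumUC by (simp add: y_def)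
  qed
  have Wc_le: "sum w Wc \<le> real (card Wc) * y"
    by (rule sum_bounded_above) (auto simp: Wc_def W_def y_def g_def intro!: anti)
  have S1: "(\<Sum>k=1..l-1. max (w k + w (g k)) (\<alpha> + x)) \<le> real (l - 1)"
  proof -
    have "(\<Sum>k=1..l-1. max (w k + w (g k)) (\<alpha> + x)) \<le> (\<Sum>k=1..l-1. 1)"
    proof (rule sum_mono)
      fix k assume k: "k \<in> {1..l-1}"
      have "w k + w (g k) \<le> 1" using notE_lt[of k] k lK Kn by auto
      moreover have "\<alpha> + x \<le> 1" using x_lt d1 by (simp add: \<alpha>_def)
      ultimately show "max (w k + w (g k)) (\<alpha> + x) \<le> 1" by simp
    qed
    thus ?thesis by simp
  qed
  have S2': "(\<Sum>k=l..K. max (w k + w (g k)) (\<alpha> + x)) = (\<Sum>k=l..K. w k + w (g k))"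
    by (rule sum.cong) (use mid in auto)
  have S3: "(\<Sum>k=K+1..n. max (w k + w (g k)) (\<alpha> + x)) \<le> (\<Sum>k=K+1..n. 2/3 + (w k + w (g k))/3)"
  proof (rule sum_mono)
    fix k assume k: "k \<in> {K+1..n}"
    have le1: "w k + w (g k) \<le> 1" using notE_gt[of k] k l1 lK by auto
    have "y \<le> w k" using anti[of k "g K"] k Kn by (auto simp: y_def g_def)
    moreover have "y \<le> w (g k)" using anti[of "g k" "g K"] k Kn by (auto simp: y_def g_def)
    ultimately have "2*y \<le> w k + w (g k)" by simp
    thus "max (w k + w (g k)) (\<alpha> + x) \<le> 2/3 + (w k + w (g k))/3"
    proof (intro max.boundedI)
      have "\<delta> \<le> 11/1000" using d1 by simp
      thus "\<alpha> + x \<le> 2 / 3 + (w k + w (g k)) / 3"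
        using arith1[of \<delta> y "w k + w (g k)" x] \<open>2*y \<le> w k + w (g k)\<close> y_gt x_lt d0 unfolding \<alpha>_def \<theta>_def by blast
    qed (use le1 arith2 in blast)
  qed
  have S3': "(\<Sum>k=K+1..n. 2/3 + (w k + w (g k))/3) = 2/3 * real (n - K) + (sum w M - y) / 3"
    using sumM by (simp add: sum.distrib sum_divide_distrib[symmetric])
  have split: "{1..n} = {1..l-1} \<union> {l..K} \<union> {K+1..n}" using l1 lK Kn by auto
  have "(\<Sum>k=1..n. max (w k + w (g k)) (\<alpha> + x)) =
      (\<Sum>k=1..l-1. max (w k + w (g k)) (\<alpha> + x)) + (\<Sum>k=l..K. max (w k + w (g k)) (\<alpha> + x))
      + (\<Sum>k=K+1..n. max (w k + w (g k)) (\<alpha> + x))"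
  proof -
    have i1: "({1..l-1} \<union> {l..K}) \<inter> {K+1..n} = {}" using lK by auto
    have i2: "{1..l-1} \<inter> {l..K} = {}" using l1 by auto
    define f where "f k = max (w k + w (g k)) (\<alpha> + x)" for k
    have "sum f ({1..l-1} \<union> {l..K} \<union> {K+1..n}) = sum f ({1..l-1} \<union> {l..K}) + sum f {K+1..n}"
      by (rule sum.union_disjoint[OF _ _ i1]) auto
    moreover have "sum f ({1..l-1} \<union> {l..K}) = sum f {1..l-1} + sum f {l..K}"
      by (rule sum.union_disjoint[OF _ _ i2]) auto
    ultimately show ?thesis unfolding split f_def by simp
  qed
  also have "\<dots> \<le> real n"
  proof -
    have nn: "real (l - 1) + real (K - l + 1) + real (n - K) = real n" using l1 lK Kn by simp
    have "(2/3) * y \<le> \<theta>" using y3 d1 x0 by (simp add: \<theta>_def \<alpha>_def)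
    hence "real (card Wc) * (2/3 * y) \<le> real (card Wc) * \<theta>" by (rule mult_left_mono) simp
    hence "(2/3) * sum w Wc \<le> \<theta> * card Wc" using Wc_le by (simp add: algebra_simps)
    hence "2 * sum w Wc \<le> \<theta> * real (card Wc) * 3" by simp
    moreover have "real (l - 1) = real l - 1" "real (K - l + 1) = 1 + (real K - real l)" "real (n - K) = real n - real K"
      using l1 lK Kn by auto
    ultimately show ?thesis using S1 S2 S2' S3 S3' C1
      arith3[of "\<Sum>k=1..l-1. max (w k + w (g k)) (\<alpha> + x)" "real l" "\<Sum>k=l..K. w k + w (g k)" "real K" "sum w Wc" "\<theta> * real (card Wc)"
          "\<Sum>k=K+1..n. max (w k + w (g k)) (\<alpha> + x)" "real n" "sum w M" y]
      by (simp add: algebra_simps)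
  qed
  finally show ?thesis by (simp add: g_def x_def \<alpha>_def)
qed
definition inv :: "nat \<Rightarrow> nat \<Rightarrow> (nat \<Rightarrow> nat \<Rightarrow> real) \<Rightarrow> real \<Rightarrow> st \<Rightarrow> bool" where
  "inv n m v \<delta> s \<longleftrightarrow>
    (\<not> ph2 s \<longrightarrow> cur s = None) \<and>
    (\<forall>k. cur s = Some k \<longrightarrow> k \<in> {1..n} \<and> own s k = None \<and> ph2 s) \<and>
    (\<forall>k\<in>{1..n}. Bk n k \<subseteq> bag s k \<and> bag s k \<subseteq> Bk n k \<union> {2*n<..m}) \<and>
    (\<forall>k\<in>{1..n}. \<forall>k'\<in>{1..n}. k \<noteq> k' \<longrightarrow> bag s k \<inter> bag s k' = {}) \<and>
    (\<forall>k\<in>{1..n}. \<forall>a. own s k = Some a \<longrightarrow> a \<in> {1..n} \<and> 3/4 + \<delta> \<le> val v a (bag s k)) \<and>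
    (\<forall>k\<in>{1..n}. \<forall>k'\<in>{1..n}. \<forall>a. own s k = Some a \<longrightarrow> own s k' = Some a \<longrightarrow> k = k') \<and>
    (\<forall>k\<in>{1..n}. bag s k \<noteq> Bk n k \<longrightarrow> (\<exists>g\<in>bag s k. 2*n < g \<and> g \<le> m \<and>
        (\<forall>a\<in>{1..n}. \<not> assigned n s a \<longrightarrow> val v a (bag s k - {g}) < 3/4 + \<delta>)))"

lemma Bk_disj: "k \<in> {1..n} \<Longrightarrow> k' \<in> {1..n} \<Longrightarrow> k \<noteq> k' \<Longrightarrow> Bk n k \<inter> Bk n k' = {}"
  by (auto simp: Bk_def)

lemma inv_init: "inv n m v \<delta> (init n)"
  using Bk_disj by (auto simp: inv_def init_def assigned_def)


lemma inv_unfold: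
  assumes "inv n m v \<delta> s"
  shows "\<not> ph2 s \<longrightarrow> cur s = None"
    and "\<And>k. cur s = Some k \<Longrightarrow> k \<in> {1..n} \<and> own s k = None \<and> ph2 s"
    and "\<And>k. k \<in> {1..n} \<Longrightarrow> Bk n k \<subseteq> bag s k \<and> bag s k \<subseteq> Bk n k \<union> {2*n<..m}"
    and "\<And>k k'. k \<in> {1..n} \<Longrightarrow> k' \<in> {1..n} \<Longrightarrow> k \<noteq> k' \<Longrightarrow> bag s k \<inter> bag s k' = {}"
    and "\<And>k a. k \<in> {1..n} \<Longrightarrow> own s k = Some a \<Longrightarrow> a \<in> {1..n} \<and> 3/4 + \<delta> \<le> val v a (bag s k)"
    and "\<And>k k' a. k \<in> {1..n} \<Longrightarrow> k' \<in> {1..n} \<Longrightarrow> own s k = Some a \<Longrightarrow> own s k' = Some a \<Longrightarrow> k = k'"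
    and "\<And>k. k \<in> {1..n} \<Longrightarrow> bag s k \<noteq> Bk n k \<Longrightarrow> (\<exists>g\<in>bag s k. 2*n < g \<and> g \<le> m \<and>
        (\<forall>a\<in>{1..n}. \<not> assigned n s a \<longrightarrow> val v a (bag s k - {g}) < 3/4 + \<delta>))"
  using assms unfolding inv_def by blast+

lemma inv_assign:
  assumes I: "inv n m v \<delta> s" and h: "k \<in> {1..n}" "own s k = None" "eligible n v \<delta> s k a"
    and c: "cur s' = None \<or> cur s' = cur s \<and> cur s \<noteq> Some k"
    and c2: "\<not> ph2 s' \<longrightarrow> cur s' = None"
    and c3: "ph2 s \<Longrightarrow> ph2 s'"
    and s': "bag s' = bag s" "own s' = (own s)(k := Some a)"
  shows "inv n m v \<delta> s'"
proof -
  note I1 = inv_unfold(1)[OF I] and I2 = inv_unfold(2)[OF I] and I3 = inv_unfold(3)[OF I]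
    and I4 = inv_unfold(4)[OF I] and I5 = inv_unfold(5)[OF I] and I6 = inv_unfold(6)[OF I]
    and I7 = inv_unfold(7)[OF I]
  have ea: "a \<in> {1..n}" "\<not> assigned n s a" "3/4+\<delta> \<le> val v a (bag s k)"
    using h(3) unfolding eligible_def by auto
  have unas: "\<not> assigned n s b" if "\<not> assigned n s' b" for b
  proof
    assume "assigned n s b"
    then obtain k' where k': "k' \<in> {1..n}" "own s k' = Some b" unfolding assigned_def by blast
    hence "k' \<noteq> k" using h(2) by auto
    hence "own s' k' = Some b" using k' s' by simp
    thus False using that k' unfolding assigned_def by blast
  qed
  show ?thesis unfolding inv_def
  proof (intro conjI)
    show "\<not> ph2 s' \<longrightarrow> cur s' = None" by (rule c2)
    show "\<forall>k'. cur s' = Some k' \<longrightarrow> k' \<in> {1..n} \<and> own s' k' = None \<and> ph2 s'"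
    proof (intro allI impI)
      fix k' assume "cur s' = Some k'"
      with c have ck: "cur s = Some k'" "k' \<noteq> k" by auto
      from I2[OF ck(1)] have "k' \<in> {1..n}" "own s k' = None" "ph2 s" by auto
      thus "k' \<in> {1..n} \<and> own s' k' = None \<and> ph2 s'" using ck c3 s' by simp
    qed
    show "\<forall>k\<in>{1..n}. Bk n k \<subseteq> bag s' k \<and> bag s' k \<subseteq> Bk n k \<union> {2*n<..m}" using I3 s' by simp
    show "\<forall>k\<in>{1..n}. \<forall>k'\<in>{1..n}. k \<noteq> k' \<longrightarrow> bag s' k \<inter> bag s' k' = {}" using I4 s' by simp
    show "\<forall>k'\<in>{1..n}. \<forall>b. own s' k' = Some b \<longrightarrow> b \<in> {1..n} \<and> 3/4 + \<delta> \<le> val v b (bag s' k')"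
    proof (intro ballI allI impI)
      fix k' b assume k': "k' \<in> {1..n}" "own s' k' = Some b"
      show "b \<in> {1..n} \<and> 3/4 + \<delta> \<le> val v b (bag s' k')"
      proof (cases "k' = k")
        case True thus ?thesis using k' ea s' by simp
      next
        case False thus ?thesis using k' I5[of k' b] s' by simp
      qed
    qed
    show "\<forall>k1\<in>{1..n}. \<forall>k2\<in>{1..n}. \<forall>b. own s' k1 = Some b \<longrightarrow> own s' k2 = Some b \<longrightarrow> k1 = k2"
    proof (intro ballI allI impI)
      fix k1 k2 b assume k: "k1 \<in> {1..n}" "k2 \<in> {1..n}" "own s' k1 = Some b" "own s' k2 = Some b"
      show "k1 = k2"
      proof (cases "k1 = k \<or> k2 = k")
        case True
        show ?thesis
        proof (rule ccontr)
          assume ne: "k1 \<noteq> k2"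
          then obtain k3 where k3: "k3 \<in> {1..n}" "k3 \<noteq> k" "own s' k3 = Some b" "b = a"
          proof -
            have ok: "own s' k = Some a" using s' by simp
            from True show ?thesis
            proof
              assume e: "k1 = k"
              hence "b = a" using ok k(3) by simp
              moreover have "k2 \<noteq> k" using e ne by simp
              ultimately show ?thesis using that[of k2] k by blast
            next
              assume e: "k2 = k"
              hence "b = a" using ok k(4) by simp
              moreover have "k1 \<noteq> k" using e ne by simp
              ultimately show ?thesis using that[of k1] k by blast
            qed
          qed
          hence "own s k3 = Some a" using s' by simp
          thus False using ea(2) k3(1) unfolding assigned_def by blast
        qed
      next
        case False
        hence "own s k1 = Some b" "own s k2 = Some b" using k s' by auto
        thus ?thesis using I6 k by blast
      qed
    qed
    show "\<forall>k\<in>{1..n}. bag s' k \<noteq> Bk n k \<longrightarrow> (\<exists>g\<in>bag s' k. 2*n < g \<and> g \<le> m \<and>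
        (\<forall>a\<in>{1..n}. \<not> assigned n s' a \<longrightarrow> val v a (bag s' k - {g}) < 3/4 + \<delta>))"
    proof (intro ballI impI)
      fix k' assume k': "k' \<in> {1..n}" "bag s' k' \<noteq> Bk n k'"
      then obtain g where g: "g \<in> bag s k'" "2*n < g" "g \<le> m"
        "\<forall>a\<in>{1..n}. \<not> assigned n s a \<longrightarrow> val v a (bag s k' - {g}) < 3/4 + \<delta>"
        using I7 s' by auto
      show "\<exists>g\<in>bag s' k'. 2*n < g \<and> g \<le> m \<and>
        (\<forall>a\<in>{1..n}. \<not> assigned n s' a \<longrightarrow> val v a (bag s' k' - {g}) < 3/4 + \<delta>)"
        using g unas s' by auto
    qed
  qed
qed


lemma assigned_same: "own s' = own s \<Longrightarrow> assigned n s' a = assigned n s a"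
  by (simp add: assigned_def)

lemma inv_frame:
  assumes I: "inv n m v \<delta> s" and o: "own s' = own s" "bag s' = bag s"
    and c: "\<not> ph2 s' \<longrightarrow> cur s' = None" "\<forall>k. cur s' = Some k \<longrightarrow> k \<in> {1..n} \<and> own s k = None \<and> ph2 s'"
  shows "inv n m v \<delta> s'"
proof -
  have as: "assigned n s' a = assigned n s a" for a by (rule assigned_same) (rule o(1))
  note I3 = inv_unfold(3)[OF I] and I4 = inv_unfold(4)[OF I] and I5 = inv_unfold(5)[OF I]
    and I6 = inv_unfold(6)[OF I] and I7 = inv_unfold(7)[OF I]
  show ?thesis unfolding inv_def as o
  proof (intro conjI)
    show "\<not> ph2 s' \<longrightarrow> cur s' = None" by (rule c(1))
    show "\<forall>k'. cur s' = Some k' \<longrightarrow> k' \<in> {1..n} \<and> own s k' = None \<and> ph2 s'" by (rule c(2))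
    show "\<forall>k\<in>{1..n}. Bk n k \<subseteq> bag s k \<and> bag s k \<subseteq> Bk n k \<union> {2*n<..m}"
      using I3 by blast
    show "\<forall>k1\<in>{1..n}. \<forall>k2\<in>{1..n}. k1 \<noteq> k2 \<longrightarrow> bag s k1 \<inter> bag s k2 = {}"
      using I4 by blast
    show "\<forall>k'\<in>{1..n}. \<forall>a. own s k' = Some a \<longrightarrow> a \<in> {1..n} \<and> 3/4 + \<delta> \<le> val v a (bag s k')"
      using I5 by blast
    show "\<forall>k1\<in>{1..n}. \<forall>k2\<in>{1..n}. \<forall>a. own s k1 = Some a \<longrightarrow> own s k2 = Some a \<longrightarrow> k1 = k2"
      using I6 by blast
    show "\<forall>k'\<in>{1..n}. bag s k' \<noteq> Bk n k' \<longrightarrow> (\<exists>g\<in>bag s k'. 2*n < g \<and> g \<le> m \<and>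
        (\<forall>a\<in>{1..n}. \<not> assigned n s a \<longrightarrow> val v a (bag s k' - {g}) < 3/4 + \<delta>))"
      using I7 by blast
  qed
qed

lemma inv_pick:
  assumes I: "inv n m v \<delta> s" and h: "ph2 s" "cur s = None" "k \<in> {1..n}" "own s k = None"
  shows "inv n m v \<delta> (s\<lparr>cur := Some k\<rparr>)"
proof -
  have as: "assigned n (s\<lparr>cur := Some k\<rparr>) a = assigned n s a" for a by (rule assigned_same) simp
  let ?s = "s\<lparr>cur := Some k\<rparr>"
  note I3 = inv_unfold(3)[OF I] and I4 = inv_unfold(4)[OF I] and I5 = inv_unfold(5)[OF I]
    and I6 = inv_unfold(6)[OF I] and I7 = inv_unfold(7)[OF I]
  have o: "own ?s = own s" "bag ?s = bag s" "ph2 ?s = ph2 s" "cur ?s = Some k" by simp_all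
  show ?thesis unfolding inv_def as o
  proof (intro conjI)
    show "\<not> ph2 s \<longrightarrow> Some k = None" using h by simp
    show "\<forall>k'. Some k = Some k' \<longrightarrow> k' \<in> {1..n} \<and> own s k' = None \<and> ph2 s" using h by simp
    show "\<forall>k\<in>{1..n}. Bk n k \<subseteq> bag s k \<and> bag s k \<subseteq> Bk n k \<union> {2*n<..m}"
      using I3 by blast
    show "\<forall>k1\<in>{1..n}. \<forall>k2\<in>{1..n}. k1 \<noteq> k2 \<longrightarrow> bag s k1 \<inter> bag s k2 = {}"
      using I4 by blast
    show "\<forall>k'\<in>{1..n}. \<forall>a. own s k' = Some a \<longrightarrow> a \<in> {1..n} \<and> 3/4 + \<delta> \<le> val v a (bag s k')"
      using I5 by blast
    show "\<forall>k1\<in>{1..n}. \<forall>k2\<in>{1..n}. \<forall>a. own s k1 = Some a \<longrightarrow> own s k2 = Some a \<longrightarrow> k1 = k2"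
      using I6 by blast
    show "\<forall>k'\<in>{1..n}. bag s k' \<noteq> Bk n k' \<longrightarrow> (\<exists>g\<in>bag s k'. 2*n < g \<and> g \<le> m \<and>
        (\<forall>a\<in>{1..n}. \<not> assigned n s a \<longrightarrow> val v a (bag s k' - {g}) < 3/4 + \<delta>))"
      using I7 by blast
  qed
qed

lemma inv_add:
  assumes I: "inv n m v \<delta> s" and h: "ph2 s" "cur s = Some k"
    "\<not> (\<exists>a\<in>{1..n}. \<not> assigned n s a \<and> 3/4 + \<delta> \<le> val v a (bag s k))"
    "2*n < g" "g \<le> m" "g \<notin> (\<Union>j\<in>{1..n}. bag s j)"
  shows "inv n m v \<delta> (s\<lparr>bag := (bag s)(k := insert g (bag s k))\<rparr>)"
proof -
  let ?s = "s\<lparr>bag := (bag s)(k := insert g (bag s k))\<rparr>"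
  note I1 = inv_unfold(1)[OF I] and I2 = inv_unfold(2)[OF I] and I3 = inv_unfold(3)[OF I]
    and I4 = inv_unfold(4)[OF I] and I5 = inv_unfold(5)[OF I] and I6 = inv_unfold(6)[OF I]
    and I7 = inv_unfold(7)[OF I]
  have as: "assigned n ?s a = assigned n s a" for a by (rule assigned_same) simp
  have kn: "k \<in> {1..n}" and ok: "own s k = None" using I2[OF h(2)] by auto
  have gk: "g \<notin> bag s j" if "j \<in> {1..n}" for j using h(6) that by blast
  show ?thesis unfolding inv_def as
  proof (intro conjI)
    show "\<not> ph2 ?s \<longrightarrow> cur ?s = None" using h by simp
    show "\<forall>k'. cur ?s = Some k' \<longrightarrow> k' \<in> {1..n} \<and> own ?s k' = None \<and> ph2 ?s" using I2 by simp
    show "\<forall>k\<in>{1..n}. Bk n k \<subseteq> bag ?s k \<and> bag ?s k \<subseteq> Bk n k \<union> {2*n<..m}"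
      using I3 h(4,5) by auto
    show "\<forall>k1\<in>{1..n}. \<forall>k2\<in>{1..n}. k1 \<noteq> k2 \<longrightarrow> bag ?s k1 \<inter> bag ?s k2 = {}"
    proof (intro ballI impI)
      fix k1 k2 assume k: "k1 \<in> {1..n}" "k2 \<in> {1..n}" "k1 \<noteq> k2"
      have "bag s k1 \<inter> bag s k2 = {}" using I4 k by blast
      thus "bag ?s k1 \<inter> bag ?s k2 = {}" using gk k by auto
    qed
    show "\<forall>k'\<in>{1..n}. \<forall>a. own ?s k' = Some a \<longrightarrow> a \<in> {1..n} \<and> 3/4 + \<delta> \<le> val v a (bag ?s k')"
    proof (intro ballI allI impI)
      fix k' a assume k': "k' \<in> {1..n}" "own ?s k' = Some a"
      hence "k' \<noteq> k" using ok by auto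
      thus "a \<in> {1..n} \<and> 3/4 + \<delta> \<le> val v a (bag ?s k')" using I5[of k' a] k' by simp
    qed
    have "own ?s = own s" by simp
    thus "\<forall>k1\<in>{1..n}. \<forall>k2\<in>{1..n}. \<forall>a. own ?s k1 = Some a \<longrightarrow> own ?s k2 = Some a \<longrightarrow> k1 = k2"
      using I6 by metis
    show "\<forall>k'\<in>{1..n}. bag ?s k' \<noteq> Bk n k' \<longrightarrow> (\<exists>g\<in>bag ?s k'. 2*n < g \<and> g \<le> m \<and>
        (\<forall>a\<in>{1..n}. \<not> assigned n s a \<longrightarrow> val v a (bag ?s k' - {g}) < 3/4 + \<delta>))"
    proof (intro ballI impI)
      fix k' assume k': "k' \<in> {1..n}" "bag ?s k' \<noteq> Bk n k'"
      show "\<exists>g\<in>bag ?s k'. 2*n < g \<and> g \<le> m \<and>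
        (\<forall>a\<in>{1..n}. \<not> assigned n s a \<longrightarrow> val v a (bag ?s k' - {g}) < 3/4 + \<delta>)"
      proof (cases "k' = k")
        case True
        have "insert g (bag s k) - {g} = bag s k" using gk[OF kn] by auto
        hence "\<forall>a\<in>{1..n}. \<not> assigned n s a \<longrightarrow> val v a (bag ?s k' - {g}) < 3/4 + \<delta>"
          using h(3) True by auto
        thus ?thesis using True h(4,5) by auto
      next
        case False
        thus ?thesis using I7[of k'] k' by simp
      qed
    qed
  qed
qed

lemma inv_step:
  assumes "step n m v \<delta> s s'" and I: "inv n m v \<delta> s"
  shows "inv n m v \<delta> s'"
  using assms(1)
proof (cases rule: step.cases)
  case (phase1_assign k a)
  have c: "cur s = None" using phase1_assign(2) inv_unfold(1)[OF I] by blast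
  show ?thesis unfolding phase1_assign(1)
    by (rule inv_assign[OF I phase1_assign(3,4,5)]) (simp_all add: c)
next
  case to_phase2
  have c: "cur s = None" using to_phase2(2) inv_unfold(1)[OF I] by blast
  show ?thesis by (rule inv_frame[OF I]) (simp_all add: to_phase2(1) c)
next
  case (phase2_pick k)
  show ?thesis unfolding phase2_pick(1) by (rule inv_pick[OF I phase2_pick(2-5)])
next
  case (phase2_add k g)
  show ?thesis unfolding phase2_add(1) by (rule inv_add[OF I phase2_add(2-7)])
next
  case (phase2_assign k a)
  have k: "k \<in> {1..n}" "own s k = None" using inv_unfold(2)[OF I phase2_assign(3)] by blast+
  show ?thesis unfolding phase2_assign(1)
    by (rule inv_assign[OF I k phase2_assign(4)]) (simp_all add: phase2_assign(2))
qed

lemma inv_reach: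
  assumes "(step n m v \<delta>)\<^sup>*\<^sup>* (init n) s"
  shows "inv n m v \<delta> s"
  using assms by (induction rule: rtranclp_induct) (auto intro: inv_init inv_step)



lemma exists_eligible:
  assumes "a \<in> {1..n}" "\<not> assigned n s a" "3/4 + \<delta> \<le> val v a (bag s k)"
  shows "\<exists>b. eligible n v \<delta> s k b"
proof (cases "\<exists>b\<in>N11 n v \<delta>. \<not> assigned n s b \<and> 3/4 + \<delta> \<le> val v b (bag s k)")
  case True
  then obtain b where b: "b \<in> N11 n v \<delta>" "\<not> assigned n s b" "3/4 + \<delta> \<le> val v b (bag s k)" by blast
  have "b \<in> {1..n}" using b(1) by (auto simp: N11_def N1_def)
  thus ?thesis using b unfolding eligible_def by blast
next
  case False
  thus ?thesis using assms unfolding eligible_def by blast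
qed

theorem lemma28:
  fixes n m :: nat and v :: "nat \<Rightarrow> nat \<Rightarrow> real" and \<delta> :: real and s :: st
  assumes "0 < \<delta>" and "\<delta> \<le> 0.011"
    and "ONI n m v \<delta>"
    and "real (card (N11 n v \<delta>)) \<le> real n * (1/4 - \<delta>) / (1/4 + \<delta>/3)"
    and "(step n m v \<delta>)\<^sup>*\<^sup>* (init n) s"
    and "\<not> (\<exists>s'. step n m v \<delta> s s')"
  shows "\<forall>i\<in>N2 n v. \<exists>k\<in>{1..n}. own s k = Some i \<and> 3/4 + \<delta> \<le> val v i (bag s k)"
proof
  fix i assume iN2: "i \<in> N2 n v"
  have i1: "i \<in> {1..n}" and iE: "\<exists>k\<in>{1..n}. 1 < val v i (Bk n k)"
    using iN2 by (auto simp: N2_def N1_def not_le)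
  have I: "inv n m v \<delta> s" using assms(5) by (rule inv_reach)
  note I1 = inv_unfold(1)[OF I] and I2 = inv_unfold(2)[OF I] and I3 = inv_unfold(3)[OF I]
    and I4 = inv_unfold(4)[OF I] and I5 = inv_unfold(5)[OF I] and I6 = inv_unfold(6)[OF I]
    and I7 = inv_unfold(7)[OF I]
  have trm: "\<not> step n m v \<delta> s s'" for s' using assms(6) by blast
  show "\<exists>k\<in>{1..n}. own s k = Some i \<and> 3/4 + \<delta> \<le> val v i (bag s k)"
  proof (cases "assigned n s i")
    case True
    then obtain k where k: "k \<in> {1..n}" "own s k = Some i" unfolding assigned_def by blast
    thus ?thesis using I5[OF k] by blast
  next
    case unas: False
    have ph: "ph2 s"
    proof (rule ccontr)
      assume nph: "\<not> ph2 s"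
      show False
      proof (cases "\<exists>k\<in>{1..n}. \<exists>a\<in>{1..n}. own s k = None \<and> \<not> assigned n s a \<and> 3/4 + \<delta> \<le> val v a (bag s k)")
        case True
        then obtain k a where ka: "k \<in> {1..n}" "a \<in> {1..n}" "own s k = None" "\<not> assigned n s a"
          "3/4 + \<delta> \<le> val v a (bag s k)" by blast
        obtain b where "eligible n v \<delta> s k b" using exists_eligible[OF ka(2,4,5)] by blast
        thus False using step.phase1_assign[OF nph ka(1,3)] trm by blast
      next
        case False
        thus False using step.to_phase2[OF nph False] trm by blast
      qed
    qed
    obtain c where c: "cur s = Some c"
    proof (cases "cur s")
      case None
      have own_all: "own s k \<noteq> None" if "k \<in> {1..n}" for k
        using step.phase2_pick[OF ph None that] trm by blast
      define f where "f k = the (own s k)" for k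
      have fS: "own s k = Some (f k)" if "k \<in> {1..n}" for k using own_all[OF that] by (auto simp: f_def)
      have "f ` {1..n} \<subseteq> {1..n}" using fS I5 by blast
      moreover have "inj_on f {1..n}"
        by (rule inj_onI) (metis fS I6)
      ultimately have "f ` {1..n} = {1..n}" by (simp add: endo_inj_surj)
      then obtain k where "k \<in> {1..n}" "f k = i" using i1 by (metis imageE)
      hence "assigned n s i" using fS unfolding assigned_def by metis
      thus ?thesis using unas by blast
    qed
    have cn: "c \<in> {1..n}" and co: "own s c = None" using I2[OF c] by auto
    have noel: "\<not> (\<exists>a\<in>{1..n}. \<not> assigned n s a \<and> 3/4 + \<delta> \<le> val v a (bag s c))"
    proof
      assume "\<exists>a\<in>{1..n}. \<not> assigned n s a \<and> 3/4 + \<delta> \<le> val v a (bag s c)"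
      then obtain a where "a \<in> {1..n}" "\<not> assigned n s a" "3/4 + \<delta> \<le> val v a (bag s c)" by blast
      then obtain b where "eligible n v \<delta> s c b" using exists_eligible by blast
      thus False using step.phase2_assign[OF ph c] trm by blast
    qed
    have allg: "g \<in> (\<Union>j\<in>{1..n}. bag s j)" if "2*n < g" "g \<le> m" for g
      using step.phase2_add[OF ph c noel that] trm by blast
    define w where "w = v i"
    have oni: "valid_instance n m v" "ordered n m v" "normalized n m v" "irreducible n v (3/4 + \<delta>)"
      using assms(3) unfolding ONI_def by auto
    have nonneg: "0 \<le> w j" if "1 \<le> j" for j
    proof (cases "j \<le> m")
      case True thus ?thesis using oni(1) i1 that unfolding valid_instance_def w_def by auto
    next
      case False thus ?thesis using oni(1) i1 unfolding valid_instance_def w_def by auto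
    qed
    have zero: "w j = 0" if "m < j" for j using oni(1) i1 that unfolding valid_instance_def w_def by auto
    have anti: "w k \<le> w j" if "1 \<le> j" "j \<le> k" for j k
    proof (cases "k \<le> m")
      case True thus ?thesis using oni(2) i1 that unfolding ordered_def w_def by auto
    next
      case False thus ?thesis using zero nonneg that by simp
    qed
    obtain P where Pcov: "(\<Union>p\<in>{1..n}. P p) = {1..m}"
      and Pdis: "\<forall>p\<in>{1..n}. \<forall>q\<in>{1..n}. p \<noteq> q \<longrightarrow> P p \<inter> P q = {}"
      and Pval: "\<forall>p\<in>{1..n}. val v i (P p) = 1"
    proof -
      have "\<exists>P :: nat \<Rightarrow> nat set. (\<Union>j\<in>{1..n}. P j) = {1..m} \<and>
        (\<forall>j\<in>{1..n}. \<forall>j'\<in>{1..n}. j \<noteq> j' \<longrightarrow> P j \<inter> P j' = {}) \<and>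
        (\<forall>j\<in>{1..n}. val v i (P j) = 1)"
        using oni(3) i1 unfolding normalized_def by (rule bspec)
      thus ?thesis using that by blast
    qed
    have n1: "1 \<le> n" using i1 by simp
    have irr: "w 1 + w (2*n+1) < 3/4 + \<delta>"
    proof -
      have "val v i {1, 2*n+1} < 3/4 + \<delta>" using oni(4) i1 unfolding irreducible_def by blast
      thus ?thesis using n1 by (simp add: val_def w_def)
    qed
    have Bkv: "val v i (Bk n k) = w k + w (2*n-k+1)" if "k \<in> {1..n}" for k
    proof -
      have "k \<noteq> 2*n-k+1" using that by auto
      thus ?thesis by (simp add: Bk_def val_def w_def)
    qed
    have Ex: "\<exists>k\<in>{1..n}. 1 < w k + w (2*n-k+1)" using iE Bkv by auto
    have keyr: "(\<Sum>k=1..n. max (w k + w (2*n-k+1)) (3/4 + \<delta> + w (2*n+1))) \<le> real n"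
      by (rule key[OF assms(1,2) nonneg anti zero Pcov]) (use Pdis Pval irr Ex in \<open>auto simp: val_def w_def\<close>)
    have bagfin: "finite (bag s k)" if "k \<in> {1..n}" for k
      using I3[OF that] by (auto simp: Bk_def intro: finite_subset)
    have bag1: "bag s k \<subseteq> {1..}" if "k \<in> {1..n}" for k
    proof
      fix x assume "x \<in> bag s k"
      hence "x \<in> Bk n k \<union> {2*n<..m}" using I3[OF that] by blast
      thus "x \<in> {1..}" using that by (auto simp: Bk_def)
    qed
    have x0: "0 \<le> w (2*n+1)" using nonneg by simp
    have bnd: "sum w (bag s k) \<le> max (w k + w (2*n-k+1)) (3/4 + \<delta> + w (2*n+1))" if k: "k \<in> {1..n}" for k
    proof (cases "bag s k = Bk n k")
      case True thus ?thesis using Bkv[OF k] by (simp add: val_def w_def)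
    next
      case False
      then obtain g where g: "g \<in> bag s k" "2*n < g" "g \<le> m"
        "\<forall>a\<in>{1..n}. \<not> assigned n s a \<longrightarrow> val v a (bag s k - {g}) < 3/4 + \<delta>"
        using I7[OF k] by blast
      have "sum w (bag s k - {g}) < 3/4 + \<delta>" using g(4) i1 unas by (simp add: val_def w_def)
      moreover have "sum w (bag s k) = w g + sum w (bag s k - {g})"
        using g(1) bagfin[OF k] by (simp add: sum.remove)
      moreover have "w g \<le> w (2*n+1)" using anti g(2) by simp
      ultimately show ?thesis by simp
    qed
    have bndc: "sum w (bag s c) < max (w c + w (2*n-c+1)) (3/4 + \<delta> + w (2*n+1))"
    proof -
      have "sum w (bag s c) < 3/4 + \<delta>" using noel i1 unas by (auto simp: val_def w_def not_le)
      thus ?thesis using x0 by simp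
    qed
    have "(\<Sum>k=1..n. sum w (bag s k)) < (\<Sum>k=1..n. max (w k + w (2*n-k+1)) (3/4 + \<delta> + w (2*n+1)))"
      by (rule sum_strict_mono_ex1) (use bnd bndc cn in auto)
    also have "\<dots> \<le> real n" by (rule keyr)
    finally have lt: "(\<Sum>k=1..n. sum w (bag s k)) < real n" .
    have disj: "\<forall>k\<in>{1..n}. \<forall>k'\<in>{1..n}. k \<noteq> k' \<longrightarrow> bag s k \<inter> bag s k' = {}" using I4 by blast
    have U: "(\<Sum>k=1..n. sum w (bag s k)) = sum w (\<Union>k\<in>{1..n}. bag s k)"
      by (rule sum.UNION_disjoint[symmetric]) (use bagfin disj in auto)
    have cover: "{1..m} \<subseteq> (\<Union>k\<in>{1..n}. bag s k)"
    proof
      fix j assume j: "j \<in> {1..m}"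
      show "j \<in> (\<Union>k\<in>{1..n}. bag s k)"
      proof (cases "2*n < j")
        case True thus ?thesis using allg j by auto
      next
        case False
        show ?thesis
        proof (cases "j \<le> n")
          case True
          hence "j \<in> Bk n j" "j \<in> {1..n}" using j by (auto simp: Bk_def)
          thus ?thesis using I3 by blast
        next
          case jn: False
          define k where "k = 2*n - j + 1"
          have "k \<in> {1..n}" "j = 2*n - k + 1" using jn False by (auto simp: k_def)
          hence "j \<in> Bk n k" "k \<in> {1..n}" by (auto simp: Bk_def)
          thus ?thesis using I3 by blast
        qed
      qed
    qed
    have "sum w {1..m} \<le> sum w (\<Union>k\<in>{1..n}. bag s k)"
    proof (rule sum_mono2)
      show "finite (\<Union>k\<in>{1..n}. bag s k)" using bagfin by blast
      show "{1..m} \<subseteq> (\<Union>k\<in>{1..n}. bag s k)" by (rule cover)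
      fix b assume "b \<in> (\<Union>k\<in>{1..n}. bag s k) - {1..m}"
      then obtain k where "k \<in> {1..n}" "b \<in> bag s k" by blast
      hence "1 \<le> b" using bag1 by fastforce
      thus "0 \<le> w b" by (rule nonneg)
    qed
    moreover have "sum w {1..m} = real n"
    proof -
      have Pfin: "\<forall>p\<in>{1..n}. finite (P p)" using Pcov by (metis UN_upper finite_atLeastAtMost finite_subset)
      have "sum w {1..m} = (\<Sum>p\<in>{1..n}. sum w (P p))"
        unfolding Pcov[symmetric] by (rule sum.UNION_disjoint[OF _ Pfin Pdis]) simp
      also have "\<dots> = (\<Sum>p\<in>{1..n}. 1)" by (rule sum.cong) (use Pval in \<open>auto simp: val_def w_def\<close>)
      finally show ?thesis by simp
    qed
    ultimately show ?thesis using lt U by simp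
  qed
qed

end
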